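(* Let $r>0$ and let $S$ be a finite set of sites in $\mathbb{H}^2$ with pairwise hyperbolic distance at least $2r$. Then every inner vertex of the Delaunay complex $\mathcal{D}(S)$ (i.e., every site whose Voronoi cell is bounded) has degree at least $e^r$ in $\mathcal{D}(S)$.
   Context: $\mathbb{H}^2$ is the hyperbolic plane of curvature $-1$. For a finite $S\subset\mathbb{H}^2$, the Voronoi cell of $s\in S$ is the set of points of $\mathbb{H}^2$ closer to $s$ than to any other site. The Delaunay complex $\mathcal{D}(S)$ is the graph on $S$ in which two sites are adjacent iff their Voronoi cells share a boundary segment of positive length (a Voronoi edge); it is a plane graph when each edge is drawn through a point of the shared Voronoi edge, and a site is an outer vertex (lies on the unbounded face) iff its Voronoi cell is unbounded. *)

theory Defs
  imports "HOL-Analysis.Analysis"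
begin

text \<open>Upper half-plane model of the hyperbolic plane of curvature -1.\<close>

definition hplane :: "complex set" where
  "hplane = {z. Im z > 0}"

definition hdist :: "complex \<Rightarrow> complex \<Rightarrow> real" where
  "hdist z w = arcosh (1 + (cmod (z - w))\<^sup>2 / (2 * Im z * Im w))"

definition voronoi_cell :: "complex set \<Rightarrow> complex \<Rightarrow> complex set" where
  "voronoi_cell S s = {p \<in> hplane. \<forall>t\<in>S. t \<noteq> s \<longrightarrow> hdist p s < hdist p t}"

definition hbounded :: "complex set \<Rightarrow> bool" where
  "hbounded A \<longleftrightarrow> (\<exists>c\<in>hplane. \<exists>R. \<forall>p\<in>A. hdist c p \<le> R)"

text \<open>Common boundary of two Voronoi cells (inside the hyperbolic plane; the topology of
  the half-plane model is the subspace topology of the complex plane).\<close>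
definition common_boundary :: "complex set \<Rightarrow> complex \<Rightarrow> complex \<Rightarrow> complex set" where
  "common_boundary S s t = closure (voronoi_cell S s) \<inter> closure (voronoi_cell S t) \<inter> hplane"

text \<open>Delaunay adjacency: the cells share a boundary segment of positive length.
  The common boundary is a convex subset of the bisector geodesic, so it has positive
  length iff it is infinite.\<close>
definition delaunay_adj :: "complex set \<Rightarrow> complex \<Rightarrow> complex \<Rightarrow> bool" where
  "delaunay_adj S s t \<longleftrightarrow> s \<in> S \<and> t \<in> S \<and> s \<noteq> t \<and> infinite (common_boundary S s t)"

definition delaunay_degree :: "complex set \<Rightarrow> complex \<Rightarrow> nat" where
  "delaunay_degree S s = card {t \<in> S. delaunay_adj S s t}"

end

theory Submission
  imports Defs
begin

lemma covering:
  fixes N :: "'a set" and phi :: "'a \<Rightarrow> real" and \<beta> :: real and L :: nat and Z :: "real set"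
  assumes fin: "finite N" and cZ: "countable Z" and b0: "\<beta> \<ge> 0"
   and cov: "\<forall>\<theta>\<in>{-2*pi*L..2*pi*L} - Z. \<exists>t\<in>N. \<exists>n::int. \<bar>n\<bar> \<le> L+1 \<and> \<bar>\<theta> - phi t - 2*pi*n\<bar> \<le> \<beta>"
  shows "4*pi*L \<le> card N * (2*L+3) * (2*\<beta>)"
proof -
  define I where "I = N \<times> {-(int L+1)..int L+1}"
  define A where "A = (\<lambda>(t,n::int). {phi t + 2*pi*n - \<beta> .. phi t + 2*pi*n + \<beta>})"
  have finI: "finite I" using fin by (simp add: I_def)
  have sub: "{-2*pi*L..2*pi*L} - Z \<subseteq> (\<Union>i\<in>I. A i)"
  proof
    fix \<theta> assume "\<theta> \<in> {-2*pi*L..2*pi*L} - Z"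
    then obtain t n where "t \<in> N" "\<bar>n\<bar> \<le> L+1" "\<bar>\<theta> - phi t - 2*pi*n\<bar> \<le> \<beta>" using cov by blast
    then show "\<theta> \<in> (\<Union>i\<in>I. A i)"
      by (intro UN_I[of "(t,n)"]) (auto simp: I_def A_def abs_le_iff)
  qed
  have "ennreal (4*pi*L) = emeasure lborel {-2*pi*L..2*pi*L}"
    by simp
  also have "\<dots> = emeasure lborel ({-2*pi*L..2*pi*L} - Z)"
    by (rule emeasure_Diff_null_set[symmetric]) (auto intro: countable_imp_null_set_lborel cZ)
  also have "\<dots> \<le> emeasure lborel (\<Union>i\<in>I. A i)"
    using finI by (intro emeasure_mono[OF sub] sets.finite_UN) (auto simp: A_def split: prod.splits)
  also have "\<dots> \<le> (\<Sum>i\<in>I. emeasure lborel (A i))"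
    by (rule emeasure_subadditive_finite[OF finI]) (auto simp: A_def)
  also have "\<dots> = (\<Sum>i\<in>I. ennreal (2*\<beta>))"
    by (intro sum.cong refl) (auto simp: A_def b0)
  also have "\<dots> = ennreal (card I * (2*\<beta>))"
    using b0 by (simp add: ennreal_of_nat_eq_real_of_nat ennreal_mult')
  finally have "4*pi*L \<le> card I * (2*\<beta>)"
    using b0 by (subst (asm) ennreal_le_iff) auto
  moreover have "card I = card N * (2*L+3)"
    unfolding I_def card_cartesian_product by (simp add: nat_add_distrib nat_mult_distrib)
  ultimately show ?thesis by simp
qed

lemma cos_ge_bound:
  fixes q x :: real
  assumes q: "0 < q" "q < 1" and x: "\<bar>x\<bar> \<le> pi" and c: "cos x \<ge> (1 - q^2)/(1 + q^2)"
  shows "\<bar>x\<bar> \<le> 2*q"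
proof -
  define \<beta> where "\<beta> = 2 * arctan q"
  have a0: "0 \<le> arctan q" using q by simp
  have a1: "arctan q \<le> q" using q by (simp add: arctan_le_self)
  have a2: "arctan q < pi/2" using arctan_ubound by simp
  have "cos \<beta> = 2 * (cos (arctan q))^2 - 1" unfolding \<beta>_def by (simp add: cos_double_cos)
  also have "\<dots> = (1 - q^2)/(1 + q^2)"
  proof -
    have qq: "1 + q^2 > 0" using q by (simp add: add_pos_nonneg)
    have "(cos (arctan q))^2 = 1/(1+q^2)" using qq by (simp add: cos_arctan power_divide)
    then show ?thesis using qq by (simp add: field_simps)
  qed
  finally have cb: "cos \<beta> = (1 - q^2)/(1 + q^2)" .
  have "cos \<beta> \<le> cos \<bar>x\<bar>" using c cb by simp
  then have "\<bar>x\<bar> \<le> \<beta>"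
    using x a0 a2 by (subst (asm) cos_mono_le_eq) (auto simp: \<beta>_def)
  then show ?thesis using a1 by (simp add: \<beta>_def)
qed

lemma angle_bound:
  fixes w :: complex and \<theta> q :: real and L :: nat
  assumes q: "0 < q" "q < 1" and w: "cmod w \<ge> (1 - q^2)/(1 + q^2)"
    and h: "Re (cis \<theta> * cnj w) \<ge> (cmod w)^2" and th: "\<bar>\<theta>\<bar> \<le> 2*pi*L"
  shows "\<exists>n::int. \<bar>n\<bar> \<le> L+1 \<and> \<bar>\<theta> - Arg w - 2*pi*n\<bar> \<le> 2*q"
proof -
  have "q^2 < 1^2" using q by (intro power_strict_mono) auto
  then have c0: "(1 - q^2)/(1 + q^2) > 0" by (intro divide_pos_pos) (auto simp: add_pos_nonneg)
  have wn: "w \<noteq> 0" using w c0 by auto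
  have "w = of_real (cmod w) * cis (Arg w)" using rcis_cmod_Arg[of w] by (simp add: rcis_def)
  then have "cis \<theta> * cnj w = of_real (cmod w) * cis (\<theta> - Arg w)"
    by (metis cis_cnj cis_mult complex_cnj_complex_of_real complex_cnj_mult diff_conv_add_uminus mult.left_commute)
  then have "Re (cis \<theta> * cnj w) = cmod w * cos (\<theta> - Arg w)" by simp
  with h wn have cge: "cos (\<theta> - Arg w) \<ge> cmod w" by (simp add: power2_eq_square)
  define n where "n = \<lfloor>(\<theta> - Arg w + pi)/(2*pi)\<rfloor>"
  define x where "x = \<theta> - Arg w - 2*pi*n"
  have "n \<le> (\<theta> - Arg w + pi)/(2*pi)" unfolding n_def by linarith
  then have l1: "2*pi*n \<le> \<theta> - Arg w + pi" by (simp add: field_simps)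
  have "(\<theta> - Arg w + pi)/(2*pi) < n + 1" unfolding n_def by linarith
  then have l2: "\<theta> - Arg w + pi < 2*pi*n + 2*pi" by (simp add: field_simps)
  have xb: "\<bar>x\<bar> \<le> pi" using l1 l2 unfolding x_def by auto
  have cs: "cos (2*pi*n) = 1" "sin (2*pi*n) = 0"
    using cos_int_2pin[of n] sin_int_2pin[of n] by (simp_all add: mult.assoc)
  have "cos x = cos (\<theta> - Arg w)"
    unfolding x_def cos_diff[of "\<theta> - Arg w"] cs by simp
  then have "cos x \<ge> (1 - q^2)/(1 + q^2)" using cge w by linarith
  then have xq: "\<bar>x\<bar> \<le> 2*q" using cos_ge_bound[OF q xb] by simp
  have A: "-pi < Arg w" "Arg w \<le> pi" using Arg_bounded by auto
  have "\<bar>real_of_int n\<bar> \<le> L + 1"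
  proof -
    have p: "0 < 2*pi" by simp
    have "2*pi*n \<le> 2*pi*L + 2*pi" using l1 th A by auto
    then have "2*pi*n \<le> 2*pi*(L + 1)" by (simp add: algebra_simps)
    then have u: "n \<le> L + 1" by (simp only: mult_le_cancel_left_pos[OF p])
    have "2*pi*(-n) \<le> 2*pi*L + 2*pi" using l2 th A by auto
    then have "2*pi*(-n) \<le> 2*pi*(L + 1)" by (simp add: algebra_simps)
    then have "-n \<le> L + 1" by (simp only: mult_le_cancel_left_pos[OF p])
    with u show ?thesis by linarith
  qed
  then have "\<bar>n\<bar> \<le> int L + 1" by linarith
  with xq show ?thesis unfolding x_def by (intro exI[of _ n]) simp
qed

definition Phi :: "real \<Rightarrow> real \<Rightarrow> complex \<Rightarrow> complex" where
  "Phi a b w = complex_of_real a + complex_of_real b * \<i> * ((1 + w) / (1 - w))"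

lemma one_minus_nz: "cmod w < 1 \<Longrightarrow> 1 - w \<noteq> 0"
  by auto

lemma Im_Phi:
  assumes "cmod w < 1"
  shows "Im (Phi a b w) = b * (1 - (cmod w)^2) / (cmod (1 - w))^2"
proof -
  have g: "\<And>X. Im (complex_of_real b * \<i> * X) = b * Re X" by simp
  have "Im (Phi a b w) = Im (complex_of_real a) + Im (complex_of_real b * \<i> * ((1 + w) / (1 - w)))"
    unfolding Phi_def by (rule plus_complex.sel)
  also have "\<dots> = b * Re ((1 + w) / (1 - w))" by (simp only: g Im_complex_of_real add_0_left)
  finally have "Im (Phi a b w) = b * Re ((1 + w) / (1 - w))" .
  also have "Re ((1 + w) / (1 - w)) = (1 - (cmod w)^2) / (cmod (1 - w))^2"
    unfolding Re_divide' cmod_power2 by (simp add: algebra_simps power2_eq_square)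
  finally show ?thesis by simp
qed

lemma Phi_hplane:
  assumes "b > 0" "cmod w < 1"
  shows "Phi a b w \<in> hplane"
proof -
  have "(cmod w)^2 < 1" using assms(2) by (simp add: abs_square_less_1)
  moreover have "cmod (1 - w) > 0" using one_minus_nz[OF assms(2)] by simp
  ultimately show ?thesis unfolding hplane_def using Im_Phi[OF assms(2)] assms(1) by simp
qed

lemma Phi_diff:
  assumes "cmod w < 1" "cmod v < 1"
  shows "Phi a b w - Phi a b v = complex_of_real b * \<i> * (2 * (w - v) / ((1 - w) * (1 - v)))"
  using one_minus_nz[OF assms(1)] one_minus_nz[OF assms(2)]
  by (simp add: Phi_def field_simps)

lemma cmod_Phi_diff:
  assumes "b > 0" "cmod w < 1" "cmod v < 1"
  shows "cmod (Phi a b w - Phi a b v) = 2 * b * cmod (w - v) / (cmod (1 - w) * cmod (1 - v))"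
  unfolding Phi_diff[OF assms(2,3)] norm_mult norm_divide using assms(1)
  by simp

definition hk :: "complex \<Rightarrow> complex \<Rightarrow> real" where
  "hk w v = 2 * (cmod (w - v))^2 / ((1 - (cmod w)^2) * (1 - (cmod v)^2))"

lemma aux_alg1:
  fixes b D A B P Q :: real
  assumes "b > 0" "A > 0" "B > 0" "P > 0" "Q > 0"
  shows "(2 * b * D / (A * B))^2 / (2 * (b * P / A^2) * (b * Q / B^2)) = 2 * D^2 / (P * Q)"
  using assms by (simp add: field_simps power2_eq_square)

lemma aux_alg2:
  fixes W U V X Y :: real
  assumes "W > 0" "U > 0" "V > 0"
  shows "2 * X / (W * U) < 2 * Y / (W * V) \<longleftrightarrow> X * V < Y * U"
proof -
  have e: "2 * X / (W * U) = (2 / W) * (X / U)" "2 * Y / (W * V) = (2 / W) * (Y / V)" by simp_all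
  have p: "0 < 2 / W" using assms by simp
  have "2 * X / (W * U) < 2 * Y / (W * V) \<longleftrightarrow> X / U < Y / V"
    unfolding e by (rule mult_less_cancel_left_pos[OF p])
  also have "\<dots> \<longleftrightarrow> X * V < Y * U" using assms by (simp add: divide_less_eq less_divide_eq mult.commute)
  finally show ?thesis .
qed

lemma hdist_Phi:
  assumes "b > 0" "cmod w < 1" "cmod v < 1"
  shows "hdist (Phi a b w) (Phi a b v) = arcosh (1 + hk w v)"
proof -
  have A: "cmod (1 - w) > 0" "cmod (1 - v) > 0" using one_minus_nz assms by auto
  have B: "1 - (cmod w)^2 > 0" "1 - (cmod v)^2 > 0" using assms by (simp_all add: abs_square_less_1)
  have "(cmod (Phi a b w - Phi a b v))\<^sup>2 / (2 * Im (Phi a b w) * Im (Phi a b v)) = hk w v"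
    unfolding cmod_Phi_diff[OF assms] Im_Phi[OF assms(2)] Im_Phi[OF assms(3)] hk_def
    using aux_alg1[OF assms(1) A B] by (simp add: mult.assoc)
  then show ?thesis unfolding hdist_def by simp
qed

lemma hk_nonneg: "cmod w < 1 \<Longrightarrow> cmod v < 1 \<Longrightarrow> hk w v \<ge> 0"
  unfolding hk_def by (intro divide_nonneg_pos mult_pos_pos) (auto simp: abs_square_less_1)

lemma hk_less_iff:
  assumes "cmod w < 1" "cmod u < 1" "cmod v < 1"
  shows "hk w u < hk w v \<longleftrightarrow> (cmod (w - u))^2 * (1 - (cmod v)^2) < (cmod (w - v))^2 * (1 - (cmod u)^2)"
proof -
  have B: "1 - (cmod w)^2 > 0" "1 - (cmod u)^2 > 0" "1 - (cmod v)^2 > 0"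
    using assms by (simp_all add: abs_square_less_1)
  show ?thesis unfolding hk_def by (rule aux_alg2[OF B])
qed

lemma hdist_Phi_less_iff:
  assumes "b > 0" "cmod w < 1" "cmod u < 1" "cmod v < 1"
  shows "hdist (Phi a b w) (Phi a b u) < hdist (Phi a b w) (Phi a b v) \<longleftrightarrow>
         (cmod (w - u))^2 * (1 - (cmod v)^2) < (cmod (w - v))^2 * (1 - (cmod u)^2)"
  unfolding hdist_Phi[OF assms(1,2,3)] hdist_Phi[OF assms(1,2,4)]
  using hk_nonneg[OF assms(2,3)] hk_nonneg[OF assms(2,4)] hk_less_iff[OF assms(2-4)]
  by simp

lemma hdist_Phi_eq_iff:
  assumes "b > 0" "cmod w < 1" "cmod u < 1" "cmod v < 1"
  shows "hdist (Phi a b w) (Phi a b u) = hdist (Phi a b w) (Phi a b v) \<longleftrightarrow>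
         (cmod (w - u))^2 * (1 - (cmod v)^2) = (cmod (w - v))^2 * (1 - (cmod u)^2)"
  using hdist_Phi_less_iff[OF assms] hdist_Phi_less_iff[OF assms(1,2,4,3)] by (smt (verit))

definition Psi :: "real \<Rightarrow> real \<Rightarrow> complex \<Rightarrow> complex" where
  "Psi a b z = ((z - complex_of_real a) / complex_of_real b - \<i>) / ((z - complex_of_real a) / complex_of_real b + \<i>)"

lemma Psi_props:
  assumes "b > 0" "z \<in> hplane"
  shows "cmod (Psi a b z) < 1" "Phi a b (Psi a b z) = z"
proof -
  define u where "u = (z - complex_of_real a) / complex_of_real b"
  have Iu: "Im u > 0" using assms unfolding u_def hplane_def by simp
  have "Im (u + \<i>) > 0" using Iu by simp
  then have nz: "u + \<i> \<noteq> 0" by (metis less_irrefl zero_complex.sel(2))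
  have "cmod (u - \<i>) < cmod (u + \<i>)"
  proof -
    have "(cmod (u - \<i>))^2 < (cmod (u + \<i>))^2" unfolding cmod_power2 using Iu by (simp add: power2_eq_square algebra_simps)
    then show ?thesis by (simp add: power_less_imp_less_base)
  qed
  then show "cmod (Psi a b z) < 1" unfolding Psi_def u_def[symmetric] using nz by (simp add: norm_divide)
  have e1: "1 + (u - \<i>) / (u + \<i>) = 2 * u / (u + \<i>)" using nz by (simp add: field_simps)
  have e2: "1 - (u - \<i>) / (u + \<i>) = 2 * \<i> / (u + \<i>)" using nz by (simp add: field_simps)
  have Y: "2 * \<i> / (u + \<i>) \<noteq> 0" using nz by simp
  have "2 * u / (u + \<i>) = (- \<i> * u) * (2 * \<i> / (u + \<i>))" using nz by (simp add: field_simps)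
  then have e3: "(2 * u / (u + \<i>)) / (2 * \<i> / (u + \<i>)) = - \<i> * u"
    using Y by (metis nonzero_mult_div_cancel_right)
  have "Phi a b (Psi a b z) = complex_of_real a + complex_of_real b * u"
    unfolding Phi_def Psi_def u_def[symmetric] e1 e2 e3 by (simp add: algebra_simps)
  then show "Phi a b (Psi a b z) = z" unfolding u_def using assms(1) by simp
qed

lemma Phi_inj:
  assumes "b > 0" "cmod w < 1" "cmod v < 1" "Phi a b w = Phi a b v"
  shows "w = v"
proof -
  have "Phi a b w - Phi a b v = 0" using assms(4) by simp
  then have "2 * (w - v) / ((1 - w) * (1 - v)) = 0" unfolding Phi_diff[OF assms(2,3)] using assms(1) by simp
  then show ?thesis using one_minus_nz[OF assms(2)] one_minus_nz[OF assms(3)] by simp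
qed

definition g :: "complex \<Rightarrow> complex \<Rightarrow> real" where
  "g v w = 2 * (Re w * Re v + Im w * Im v) - (cmod v)^2 * (1 + (cmod w)^2)"

lemma cmod_diff_sq: "(cmod (w - v))^2 = (cmod w)^2 - 2 * (Re w * Re v + Im w * Im v) + (cmod v)^2"
  unfolding cmod_power2 by (simp add: power2_eq_square algebra_simps)

lemma g_less_iff:
  assumes "b > 0" "cmod w < 1" "cmod v < 1"
  shows "hdist (Phi a b w) (Phi a b 0) < hdist (Phi a b w) (Phi a b v) \<longleftrightarrow> g v w < 0"
  unfolding hdist_Phi_less_iff[OF assms(1,2) _ assms(3), of 0, simplified] g_def cmod_diff_sq
  by (simp add: algebra_simps)

lemma g_greater_iff:
  assumes "b > 0" "cmod w < 1" "cmod v < 1"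
  shows "hdist (Phi a b w) (Phi a b v) < hdist (Phi a b w) (Phi a b 0) \<longleftrightarrow> g v w > 0"
  unfolding hdist_Phi_less_iff[OF assms(1,2,3), of 0, simplified] g_def cmod_diff_sq
  by (simp add: algebra_simps)

lemma g_eq_iff:
  assumes "b > 0" "cmod w < 1" "cmod v < 1"
  shows "hdist (Phi a b w) (Phi a b 0) = hdist (Phi a b w) (Phi a b v) \<longleftrightarrow> g v w = 0"
  using g_less_iff[OF assms] g_greater_iff[OF assms] by (smt (verit))

definition pt :: "real \<Rightarrow> real \<Rightarrow> complex" where
  "pt \<theta> \<rho> = Complex (\<rho> * cos \<theta>) (\<rho> * sin \<theta>)"

definition cdir :: "complex \<Rightarrow> real \<Rightarrow> real" where
  "cdir v \<theta> = Re v * cos \<theta> + Im v * sin \<theta>"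

lemma cmod_pt_sq: "(cmod (pt \<theta> \<rho>))^2 = \<rho>^2"
  unfolding cmod_power2 pt_def complex.sel power_mult_distrib
  by (metis distrib_left mult.right_neutral sin_cos_squared_add2)

lemma cmod_pt: "cmod (pt \<theta> \<rho>) = \<bar>\<rho>\<bar>"
  using cmod_pt_sq[of \<theta> \<rho>] by (metis norm_ge_zero real_sqrt_abs real_sqrt_unique)

lemma g_pt: "g v (pt \<theta> \<rho>) = 2 * \<rho> * cdir v \<theta> - (cmod v)^2 * (1 + \<rho>^2)"
  unfolding g_def cmod_pt_sq by (simp add: pt_def cdir_def algebra_simps)

lemma g_scale:
  assumes "g v y = 0"
  shows "g v (complex_of_real l * y) = (cmod v)^2 * (l - 1) * (1 - l * (cmod y)^2)"
proof -
  have n: "(cmod (complex_of_real l * y))^2 = l^2 * (cmod y)^2"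
    by (simp add: norm_mult power_mult_distrib)
  have h: "2 * (Re y * Re v + Im y * Im v) = (cmod v)^2 * (1 + (cmod y)^2)" using assms unfolding g_def by simp
  have "g v (complex_of_real l * y) = l * (2 * (Re y * Re v + Im y * Im v)) - (cmod v)^2 * (1 + l^2 * (cmod y)^2)"
    unfolding g_def n by (simp add: algebra_simps)
  then have "g v (complex_of_real l * y) = l * ((cmod v)^2 * (1 + (cmod y)^2)) - (cmod v)^2 * (1 + l^2 * (cmod y)^2)"
    unfolding h .
  then show ?thesis by (simp add: algebra_simps power2_eq_square)
qed

lemma quad_pos_imp:
  fixes m c x :: real
  assumes "m > 0" "0 \<le> x" "x < 1" "2 * x * c - m * (1 + x^2) \<ge> 0"
  shows "c > m"
proof (rule ccontr)
  assume "\<not> c > m"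
  then have "2 * x * c \<le> 2 * x * m" using assms(2) by (simp add: mult_left_mono)
  moreover have "2 * x * m - m * (1 + x^2) = - m * (1 - x)^2" by (simp add: algebra_simps power2_eq_square)
  moreover have "m * (1 - x)^2 > 0" using assms by simp
  ultimately show False using assms(4) by linarith
qed

definition rootf :: "real \<Rightarrow> real \<Rightarrow> real" where
  "rootf m c = (c - sqrt (c^2 - m^2)) / m"

lemma quad_root:
  fixes m c :: real
  assumes m: "m > 0" and cm: "c > m"
  shows "0 < rootf m c" "rootf m c < 1" "2 * rootf m c * c - m * (1 + (rootf m c)^2) = 0"
    "\<And>x. 0 \<le> x \<Longrightarrow> x < rootf m c \<Longrightarrow> 2 * x * c - m * (1 + x^2) < 0"
    "\<And>x. 0 \<le> x \<Longrightarrow> x < 1 \<Longrightarrow> 2 * x * c - m * (1 + x^2) \<ge> 0 \<Longrightarrow> rootf m c \<le> x"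
    "\<And>x. 0 \<le> x \<Longrightarrow> x < 1 \<Longrightarrow> 2 * x * c - m * (1 + x^2) = 0 \<Longrightarrow> x = rootf m c"
proof -
  define s where "s = sqrt (c^2 - m^2)"
  have "m^2 < c^2" using m cm by (intro power_strict_mono) auto
  then have d: "c^2 - m^2 > 0" by simp
  have s0: "s > 0" using d by (simp add: s_def)
  have ss: "s^2 = c^2 - m^2" using d by (simp add: s_def)
  have "s^2 < c^2" using ss m by simp
  then have sc: "s < c" using m cm by (intro power_less_imp_less_base[of s 2 c]) auto
  have r: "rootf m c = (c - s) / m" by (simp add: rootf_def s_def)
  have key: "\<And>x. 2 * x * c - m * (1 + x^2) = - ((m * x - c - s) * (m * x - c + s)) / m"
    using m ss by (simp add: field_simps power2_eq_square)
  show "0 < rootf m c" using r sc m by simp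
  have "c - s < m"
  proof -
    have mm: "m * m < c * m" by (rule mult_strict_right_mono[OF cm m])
    have "(c - m)^2 = c*c - 2*(c*m) + m*m" by (simp add: power2_eq_square algebra_simps)
    also have "\<dots> < c*c - m*m" using mm by linarith
    also have "\<dots> = s^2" using ss by (simp add: power2_eq_square)
    finally have "(c - m)^2 < s^2" .
    then have "c - m < s" using s0 by (intro power_less_imp_less_base[of "c - m" 2 s]) auto
    then show ?thesis by simp
  qed
  then show "rootf m c < 1" using r m by simp
  show "2 * rootf m c * c - m * (1 + (rootf m c)^2) = 0"
    unfolding key r using m by simp
  show lt: "\<And>x. 0 \<le> x \<Longrightarrow> x < rootf m c \<Longrightarrow> 2 * x * c - m * (1 + x^2) < 0"
  proof -
    fix x assume "0 \<le> x" "x < rootf m c"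
    then have "m * x < c - s" using r m by (simp add: field_simps)
    then have "(m * x - c - s) < 0" "(m * x - c + s) < 0" using s0 by auto
    then have "(m * x - c - s) * (m * x - c + s) > 0" by (simp add: mult_neg_neg)
    then show "2 * x * c - m * (1 + x^2) < 0" unfolding key using m by simp
  qed
  show "\<And>x. 0 \<le> x \<Longrightarrow> x < 1 \<Longrightarrow> 2 * x * c - m * (1 + x^2) \<ge> 0 \<Longrightarrow> rootf m c \<le> x"
    using lt by force
  show "\<And>x. 0 \<le> x \<Longrightarrow> x < 1 \<Longrightarrow> 2 * x * c - m * (1 + x^2) = 0 \<Longrightarrow> x = rootf m c"
  proof -
    fix x assume x: "0 \<le> x" "x < 1" "2 * x * c - m * (1 + x^2) = 0"
    have "rootf m c \<le> x" using lt x by force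
    have "(m * x - c - s) * (m * x - c + s) = 0" using x(3) unfolding key using m by simp
    moreover have "m * x - c - s < 0" using x m cm s0 mult_strict_left_mono[of x 1 m] by linarith
    ultimately have "m * x - c + s = 0" by simp
    moreover have "m * rootf m c = c - s" using r m by simp
    ultimately have "m * x = m * rootf m c" by linarith
    then show "x = rootf m c" using m by simp
  qed
qed

lemma pt_inj:
  assumes "pt \<theta>1 \<rho>1 = pt \<theta>2 \<rho>2" "\<rho>1 > 0" "\<rho>2 > 0" "\<bar>\<theta>1 - \<theta>2\<bar> < 2 * pi"
  shows "\<theta>1 = \<theta>2"
proof -
  have "\<rho>1 = \<rho>2" using cmod_pt[of \<theta>1 \<rho>1] cmod_pt[of \<theta>2 \<rho>2] assms by simp
  then have cs: "cos \<theta>1 = cos \<theta>2" "sin \<theta>1 = sin \<theta>2" using assms(1,2) by (simp_all add: pt_def)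
  have "cos (\<theta>1 - \<theta>2) = 1" unfolding cos_diff cs by (simp add: sin_cos_squared_add2[unfolded power2_eq_square])
  then obtain n :: int where n: "\<theta>1 - \<theta>2 = real_of_int n * 2 * pi" using cos_one_2pi_int by blast
  then have "\<bar>real_of_int n\<bar> * (2 * pi) < 1 * (2 * pi)" using assms(4) by (simp add: abs_mult)
  moreover have p2: "2 * pi > 0" by simp
  ultimately have "\<bar>real_of_int n\<bar> < 1" by (simp only: mult_less_cancel_right_pos[OF p2])
  then have "n = 0" by linarith
  then show ?thesis using n by simp
qed

locale vsetup =
  fixes S :: "complex set" and s :: complex
  assumes fin: "finite S" and Sh: "S \<subseteq> hplane" and sS: "s \<in> S"
begin

abbreviation P where "P \<equiv> Phi (Re s) (Im s)"

definition W where "W u = Psi (Re s) (Im s) u"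

lemma b_pos: "Im s > 0" using Sh sS by (auto simp: hplane_def)

lemma W_lt: "u \<in> S \<Longrightarrow> cmod (W u) < 1"
  using Psi_props(1)[OF b_pos] Sh unfolding W_def by auto

lemma PW: "u \<in> S \<Longrightarrow> P (W u) = u"
  using Psi_props(2)[OF b_pos] Sh unfolding W_def by auto

lemma P0: "P 0 = s"
  by (simp add: Phi_def complex_eq_iff)

lemma W_inj: "u1 \<in> S \<Longrightarrow> u2 \<in> S \<Longrightarrow> W u1 = W u2 \<Longrightarrow> u1 = u2"
  using PW by metis

lemma W_nz: "u \<in> S \<Longrightarrow> u \<noteq> s \<Longrightarrow> W u \<noteq> 0"
  using PW P0 by metis

lemma P_hplane: "cmod w < 1 \<Longrightarrow> P w \<in> hplane"
  using Phi_hplane[OF b_pos] .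

lemma cell_iff:
  assumes "cmod w < 1"
  shows "P w \<in> voronoi_cell S s \<longleftrightarrow> (\<forall>u\<in>S. u \<noteq> s \<longrightarrow> g (W u) w < 0)"
proof -
  have "\<And>u. u \<in> S \<Longrightarrow> hdist (P w) s < hdist (P w) u \<longleftrightarrow> g (W u) w < 0"
  proof -
    fix u assume u: "u \<in> S"
    have "hdist (P w) s < hdist (P w) u \<longleftrightarrow> hdist (P w) (P 0) < hdist (P w) (P (W u))"
      using PW[OF u] P0 by simp
    also have "\<dots> \<longleftrightarrow> g (W u) w < 0" by (rule g_less_iff[OF b_pos assms W_lt[OF u]])
    finally show "hdist (P w) s < hdist (P w) u \<longleftrightarrow> g (W u) w < 0" .
  qed
  then show ?thesis unfolding voronoi_cell_def using P_hplane[OF assms] by auto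
qed

lemma bdry_point:
  assumes t: "t \<in> S" "t \<noteq> s" and y: "cmod y < 1" "y \<noteq> 0" and gt: "g (W t) y = 0"
    and gu: "\<forall>u\<in>S. u \<noteq> s \<and> u \<noteq> t \<longrightarrow> g (W u) y < 0"
  shows "P y \<in> common_boundary S s t"
proof -
  define v where "v = W t"
  have v1: "cmod v < 1" using W_lt[OF t(1)] by (simp add: v_def)
  have vnz: "v \<noteq> 0" using W_nz[OF t] by (simp add: v_def)
  define m where "m = (cmod v)^2"
  have m0: "m > 0" using vnz by (simp add: m_def)
  have gsc: "\<And>l. g v (complex_of_real l * y) = m * (l - 1) * (1 - l * (cmod y)^2)"
    using g_scale[of v y] gt by (simp add: v_def m_def)
  have ny: "cmod y > 0" "(cmod y)^2 < 1" using y by (auto simp: abs_square_less_1)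
  have y1: "1 - y \<noteq> 0" using y(1) by auto
  have limN: "((\<lambda>l::real. P (complex_of_real l * y)) \<longlongrightarrow> P y) (at 1)"
  proof -
    have "((\<lambda>l::real. P (complex_of_real l * y)) \<longlongrightarrow> P (complex_of_real 1 * y)) (at 1)"
      unfolding Phi_def using y1 by (intro tendsto_intros) auto
    then show ?thesis by simp
  qed
  have contg: "((\<lambda>l::real. g w (complex_of_real l * y)) \<longlongrightarrow> g w y) (at 1)" for w
  proof -
    have "((\<lambda>l::real. g w (complex_of_real l * y)) \<longlongrightarrow> g w (complex_of_real 1 * y)) (at 1)"
      unfolding g_def by (intro tendsto_intros)
    then show ?thesis by simp
  qed
  define S' where "S' = S - {s, t}"
  have finS': "finite S'" using fin by (simp add: S'_def)
  have ev1: "eventually (\<lambda>l. l \<in> {0<..<1}) (at_left (1::real))"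
    by (rule eventually_at_left_real) simp
  have ev2: "eventually (\<lambda>l. \<forall>u\<in>S'. g (W u) (complex_of_real l * y) < 0) (at_left (1::real))"
  proof (rule eventually_ball_finite[OF finS'], rule ballI)
    fix u assume "u \<in> S'"
    then have "g (W u) y < 0" using gu by (auto simp: S'_def)
    then have "eventually (\<lambda>l. g (W u) (complex_of_real l * y) < 0) (at (1::real))"
      using order_tendstoD(2)[OF contg] by blast
    then show "eventually (\<lambda>l. g (W u) (complex_of_real l * y) < 0) (at_left (1::real))"
      by (rule filter_leD[OF at_within_le_at])
  qed
  have cs: "P y \<in> closure (voronoi_cell S s)"
  proof (rule Lim_in_closed_set[OF closed_closure _ trivial_limit_at_left_real])
    show "((\<lambda>l::real. P (complex_of_real l * y)) \<longlongrightarrow> P y) (at_left 1)"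
      by (rule tendsto_mono[OF at_within_le_at limN])
    show "eventually (\<lambda>l. P (complex_of_real l * y) \<in> closure (voronoi_cell S s)) (at_left (1::real))"
      using ev1 ev2
    proof eventually_elim
      case (elim l)
      have l: "0 < l" "l < 1" using elim(1) by auto
      have n: "cmod (complex_of_real l * y) = l * cmod y" using l by (simp add: norm_mult)
      have nl: "cmod (complex_of_real l * y) < 1" unfolding n using l y(1)
        by (metis less_trans mult_less_cancel_right1 mult_strict_left_mono norm_ge_zero less_eq_real_def mult.commute mult_left_le_one_le)
      have "l * (cmod y)^2 \<le> (cmod y)^2" using l by (intro mult_left_le_one_le) auto
      then have "l * (cmod y)^2 < 1" using ny by linarith
      then have "1 - l * (cmod y)^2 > 0" by simp
      moreover have "m * (l - 1) < 0" using m0 l by (intro mult_pos_neg) auto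
      ultimately have "m * (l - 1) * (1 - l * (cmod y)^2) < 0" by (simp add: mult_neg_pos)
      then have "g (W t) (complex_of_real l * y) < 0" using gsc[of l] unfolding v_def by simp
      then have "P (complex_of_real l * y) \<in> voronoi_cell S s"
        using elim(2) unfolding cell_iff[OF nl] S'_def by auto
      then show ?case using closure_subset by blast
    qed
  qed
  define Qf where "Qf u w = (cmod (w - W u))^2 * (1 - (cmod v)^2) - (cmod (w - v))^2 * (1 - (cmod (W u))^2)" for u w
  have Qy: "Qf u y > 0" if u: "u \<in> S'" for u
  proof -
    have uS: "u \<in> S" and us: "u \<noteq> s" and ut: "u \<noteq> t" using u by (auto simp: S'_def)
    have e1: "hdist (P y) (P 0) = hdist (P y) (P v)" using g_eq_iff[OF b_pos y(1) v1] gt by (simp add: v_def)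
    have e2: "hdist (P y) (P 0) < hdist (P y) (P (W u))" using g_less_iff[OF b_pos y(1) W_lt[OF uS]] gu uS us ut by auto
    have "hdist (P y) (P v) < hdist (P y) (P (W u))" using e1 e2 by simp
    then show ?thesis using hdist_Phi_less_iff[OF b_pos y(1) v1 W_lt[OF uS]] unfolding Qf_def by simp
  qed
  have ev3: "eventually (\<lambda>l. l \<in> {1<..<2}) (at_right (1::real))"
    by (rule eventually_at_right_real) simp
  have ev4: "eventually (\<lambda>l. l * (cmod y)^2 < 1 \<and> l * cmod y < 1) (at_right (1::real))"
  proof -
    have "((\<lambda>l::real. l * (cmod y)^2) \<longlongrightarrow> 1 * (cmod y)^2) (at 1)" by (intro tendsto_intros)
    then have A: "eventually (\<lambda>l. l * (cmod y)^2 < 1) (at (1::real))" using order_tendstoD(2) ny by fastforce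
    have "((\<lambda>l::real. l * cmod y) \<longlongrightarrow> 1 * cmod y) (at 1)" by (intro tendsto_intros)
    then have B: "eventually (\<lambda>l. l * cmod y < 1) (at (1::real))" using order_tendstoD(2) y(1) by fastforce
    show ?thesis using eventually_conj[OF A B] by (rule filter_leD[OF at_within_le_at])
  qed
  have ev5: "eventually (\<lambda>l. \<forall>u\<in>S'. Qf u (complex_of_real l * y) > 0) (at_right (1::real))"
  proof (rule eventually_ball_finite[OF finS'], rule ballI)
    fix u assume u: "u \<in> S'"
    have "((\<lambda>l::real. Qf u (complex_of_real l * y)) \<longlongrightarrow> Qf u (complex_of_real 1 * y)) (at 1)"
      unfolding Qf_def by (intro tendsto_intros)
    then have "eventually (\<lambda>l. Qf u (complex_of_real l * y) > 0) (at (1::real))"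
      using order_tendstoD(1) Qy[OF u] by fastforce
    then show "eventually (\<lambda>l. Qf u (complex_of_real l * y) > 0) (at_right (1::real))"
      by (rule filter_leD[OF at_within_le_at])
  qed
  have ct: "P y \<in> closure (voronoi_cell S t)"
  proof (rule Lim_in_closed_set[OF closed_closure _ trivial_limit_at_right_real])
    show "((\<lambda>l::real. P (complex_of_real l * y)) \<longlongrightarrow> P y) (at_right 1)"
      by (rule tendsto_mono[OF at_within_le_at limN])
    show "eventually (\<lambda>l. P (complex_of_real l * y) \<in> closure (voronoi_cell S t)) (at_right (1::real))"
      using ev3 ev4 ev5
    proof eventually_elim
      case (elim l)
      define w where "w = complex_of_real l * y"
      have l: "1 < l" using elim(1) by auto
      have n: "cmod w = l * cmod y" using l by (simp add: norm_mult w_def)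
      have nl: "cmod w < 1" unfolding n using elim(2) by simp
      have "1 - l * (cmod y)^2 > 0" using elim(2) by simp
      moreover have "m * (l - 1) > 0" using m0 l by simp
      ultimately have "m * (l - 1) * (1 - l * (cmod y)^2) > 0" by simp
      then have gp: "g v w > 0" using gsc[of l] unfolding w_def by simp
      have "\<forall>u\<in>S. u \<noteq> t \<longrightarrow> hdist (P w) t < hdist (P w) u"
      proof (intro ballI impI)
        fix u assume uS: "u \<in> S" and ut: "u \<noteq> t"
        show "hdist (P w) t < hdist (P w) u"
        proof (cases "u = s")
          case True
          have "hdist (P w) (P v) < hdist (P w) (P 0)" using g_greater_iff[OF b_pos nl v1, of "Re s"] gp by simp
          then show ?thesis using True PW[OF t(1)] P0 by (simp add: v_def)
        next
          case False
          then have "u \<in> S'" using uS ut by (simp add: S'_def)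
          then have "Qf u w > 0" using elim(3) by (simp add: w_def)
          then have "hdist (P w) (P v) < hdist (P w) (P (W u))"
            using hdist_Phi_less_iff[OF b_pos nl v1 W_lt[OF uS]] unfolding Qf_def by simp
          then show ?thesis using PW[OF t(1)] PW[OF uS] by (simp add: v_def)
        qed
      qed
      then have "P w \<in> voronoi_cell S t" unfolding voronoi_cell_def using P_hplane[OF nl] by simp
      then show ?case using closure_subset unfolding w_def by blast
    qed
  qed
  show ?thesis unfolding common_boundary_def using cs ct P_hplane[OF y(1)] by simp
qed

lemma neighbor:
  assumes t: "t \<in> S" "t \<noteq> s" and tau: "0 < \<tau>" "\<tau> < 1" and gt: "g (W t) (pt \<theta> \<tau>) = 0"
    and gu: "\<forall>u\<in>S. u \<noteq> s \<and> u \<noteq> t \<longrightarrow> g (W u) (pt \<theta> \<tau>) < 0"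
  shows "delaunay_adj S s t"
proof -
  define v where "v = W t"
  have v1: "cmod v < 1" using W_lt[OF t(1)] by (simp add: v_def)
  have vnz: "v \<noteq> 0" using W_nz[OF t] by (simp add: v_def)
  define m where "m = (cmod v)^2"
  have m0: "m > 0" using vnz by (simp add: m_def)
  have g0: "2 * \<tau> * cdir v \<theta> - m * (1 + \<tau>^2) = 0" using gt g_pt[of v \<theta> \<tau>] by (simp add: v_def m_def)
  have cgt: "cdir v \<theta> > m" using quad_pos_imp[OF m0 _ tau(2)] g0 tau(1) by simp
  have taur: "\<tau> = rootf m (cdir v \<theta>)" using quad_root(6)[OF m0 cgt] g0 tau by simp
  define yf where "yf x = pt x (rootf m (cdir v x))" for x
  have yft: "yf \<theta> = pt \<theta> \<tau>" using taur by (simp add: yf_def)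
  define S' where "S' = S - {s, t}"
  have finS': "finite S'" using fin by (simp add: S'_def)
  have idn: "((\<lambda>x. x) \<longlongrightarrow> \<theta>) (nhds \<theta>)" by (rule filterlim_ident)
  have tc: "((\<lambda>x. cdir v x) \<longlongrightarrow> cdir v \<theta>) (nhds \<theta>)" unfolding cdir_def by (intro tendsto_intros idn)
  have tg: "((\<lambda>x. g w (yf x)) \<longlongrightarrow> g w (yf \<theta>)) (nhds \<theta>)" for w
    unfolding g_def yf_def pt_def rootf_def cdir_def using m0 by (intro tendsto_intros idn) auto
  have evc: "eventually (\<lambda>x. cdir v x > m) (nhds \<theta>)" using order_tendstoD(1)[OF tc cgt] .
  have evg: "eventually (\<lambda>x. \<forall>u\<in>S'. g (W u) (yf x) < 0) (nhds \<theta>)"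
  proof (rule eventually_ball_finite[OF finS'], rule ballI)
    fix u assume "u \<in> S'"
    then have "g (W u) (yf \<theta>) < 0" using gu yft by (auto simp: S'_def)
    then show "eventually (\<lambda>x. g (W u) (yf x) < 0) (nhds \<theta>)" using order_tendstoD(2)[OF tg] by blast
  qed
  obtain d where d: "d > 0" "\<forall>x. dist x \<theta> < d \<longrightarrow> cdir v x > m \<and> (\<forall>u\<in>S'. g (W u) (yf x) < 0)"
    using eventually_conj[OF evc evg] unfolding eventually_nhds_metric by blast
  define e where "e = min d 1"
  have e0: "e > 0" using d by (simp add: e_def)
  define I where "I = {\<theta> - e<..<\<theta> + e}"
  have infI: "infinite I" using e0 by (simp add: I_def)
  have props: "0 < rootf m (cdir v x) \<and> rootf m (cdir v x) < 1 \<and> cmod (yf x) < 1 \<and> yf x \<noteq> 0 \<and>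
      g v (yf x) = 0 \<and> (\<forall>u\<in>S'. g (W u) (yf x) < 0)" if x: "x \<in> I" for x
  proof -
    have "dist x \<theta> < d" using x by (auto simp: I_def e_def dist_real_def)
    then have cx: "cdir v x > m" and gx: "\<forall>u\<in>S'. g (W u) (yf x) < 0" using d by auto
    have r0: "0 < rootf m (cdir v x)" and r1: "rootf m (cdir v x) < 1" using quad_root(1,2)[OF m0 cx] by auto
    have "cmod (yf x) = rootf m (cdir v x)" using r0 by (simp add: yf_def cmod_pt)
    moreover have "g v (yf x) = 0" unfolding yf_def g_pt m_def[symmetric] using quad_root(3)[OF m0 cx] .
    ultimately show ?thesis using r0 r1 gx by auto
  qed
  have sub: "(P \<circ> yf) ` I \<subseteq> common_boundary S s t"
  proof
    fix z assume "z \<in> (P \<circ> yf) ` I"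
    then obtain x where x: "x \<in> I" and z: "z = P (yf x)" by auto
    have "\<forall>u\<in>S. u \<noteq> s \<and> u \<noteq> t \<longrightarrow> g (W u) (yf x) < 0" using props[OF x] by (auto simp: S'_def)
    then show "z \<in> common_boundary S s t" unfolding z
      using bdry_point[OF t] props[OF x] by (simp add: v_def)
  qed
  have inj: "inj_on (P \<circ> yf) I"
  proof (rule inj_onI)
    fix x1 x2 assume x1: "x1 \<in> I" and x2: "x2 \<in> I" and eq: "(P \<circ> yf) x1 = (P \<circ> yf) x2"
    have "yf x1 = yf x2" using Phi_inj[OF b_pos] props[OF x1] props[OF x2] eq by auto
    moreover have "\<bar>x1 - x2\<bar> < 2 * pi"
    proof -
      have "\<bar>x1 - x2\<bar> < 2 * e" using x1 x2 by (auto simp: I_def)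
      also have "\<dots> \<le> 2" by (simp add: e_def)
      also have "2 < 2 * pi" using pi_gt3 by simp
      finally show ?thesis .
    qed
    ultimately show "x1 = x2" using pt_inj props[OF x1] props[OF x2] unfolding yf_def by blast
  qed
  have "infinite ((P \<circ> yf) ` I)" using infI inj finite_imageD by blast
  then have "infinite (common_boundary S s t)" using sub finite_subset by blast
  then show ?thesis unfolding delaunay_adj_def using sS t by auto
qed

end

lemma hk_big:
  fixes A B D \<delta> \<eta> K :: real
  assumes "0 < A" "A \<le> 1" "0 < B" "B \<le> 2*\<eta>" "\<delta>/2 \<le> D" "0 < \<delta>" "0 < \<eta>" "8*K*\<eta> \<le> \<delta>^2" "0 < K"
  shows "2*K \<le> 2*D^2/(A*B)"
proof -
  have D2: "(\<delta>/2)^2 \<le> D^2" using assms by (intro power_mono) auto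
  have "2*K \<le> 2*(\<delta>/2)^2/(2*\<eta>)" using assms by (simp add: field_simps power2_eq_square)
  also have "\<dots> \<le> 2*D^2/(A*B)"
  proof (rule frac_le)
    show "0 \<le> 2*D^2" by simp
    show "2*(\<delta>/2)^2 \<le> 2*D^2" using D2 by simp
    show "0 < A*B" using assms by simp
    have "A*B \<le> B" using assms by (intro mult_left_le_one_le) auto
    then show "A*B \<le> 2*\<eta>" using assms by linarith
  qed
  finally show ?thesis .
qed

lemma sep_alg:
  fixes q m :: real
  assumes q: "0 < q" "q < 1" and m: "0 \<le> m" "m < 1" and h: "(1/q^2 + q^2)/2 \<le> 1 + 2*m/(1-m)"
  shows "((1 - q^2)/(1 + q^2))^2 \<le> m"
proof -
  have q2: "q^2 > 0" using q by simp
  have "1 + 2*m/(1-m) = (1+m)/(1-m)" using m by (simp add: field_simps)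
  with h have "(1/q^2 + q^2)/2 \<le> (1+m)/(1-m)" by simp
  then have "(1/q^2 + q^2) * (1-m) \<le> 2*(1+m)" using m by (simp add: field_simps)
  then have "q^2 * ((1/q^2 + q^2) * (1-m)) \<le> q^2 * (2*(1+m))" using q2 by (intro mult_left_mono) auto
  moreover have eq0: "q^2 * (1/q^2 + q^2) = 1 + q^2*q^2" using q2 by (simp add: field_simps)
  have A: "q^2 * ((1/q^2 + q^2) * (1-m)) = (1 + q^2*q^2) * (1-m)" unfolding mult.assoc[symmetric] eq0 ..
  have B: "q^2 * (2*(1+m)) = 2*q^2*(1+m)" by simp
  ultimately have "(1 + q^2*q^2) * (1-m) \<le> 2*q^2*(1+m)" unfolding A B by simp
  then have "(1 - q^2)^2 \<le> m * (1 + q^2)^2" by (simp add: power2_eq_square algebra_simps)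
  moreover have "1 + q^2 > 0" using q2 by linarith
  then have pos: "(1 + q^2)^2 > 0" by simp
  ultimately show ?thesis by (simp add: power_divide divide_le_eq mult.commute)
qed

definition iv :: "complex \<Rightarrow> complex" where
  "iv v = v / complex_of_real ((cmod v)^2)"

lemma iv_inj: "v1 \<noteq> 0 \<Longrightarrow> v2 \<noteq> 0 \<Longrightarrow> iv v1 = iv v2 \<Longrightarrow> v1 = v2"
proof -
  assume n: "v1 \<noteq> 0" "v2 \<noteq> 0" and e: "iv v1 = iv v2"
  have "cmod (iv v) = 1 / cmod v" if "v \<noteq> 0" for v
    using that by (simp add: iv_def norm_divide norm_mult power2_eq_square)
  then have "cmod v1 = cmod v2" using e n by (metis divide_cancel_left one_neq_zero)
  then show "v1 = v2" using e n by (simp add: iv_def)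
qed

lemma cdir_iv: "cdir (iv v) \<theta> = cdir v \<theta> / (cmod v)^2"
  by (simp add: iv_def cdir_def add_divide_distrib)

lemma cdir_diff: "cdir (v1 - v2) \<theta> = cdir v1 \<theta> - cdir v2 \<theta>"
  by (simp add: cdir_def algebra_simps)

lemma two_zero:
  assumes "v1 \<noteq> 0" "v2 \<noteq> 0" "\<tau> > 0" "g v1 (pt \<theta> \<tau>) = 0" "g v2 (pt \<theta> \<tau>) = 0"
  shows "cdir (iv v1 - iv v2) \<theta> = 0"
proof -
  have "cdir v \<theta> / (cmod v)^2 = (1 + \<tau>^2) / (2*\<tau>)" if "v \<noteq> 0" "g v (pt \<theta> \<tau>) = 0" for v
    using that assms(3) unfolding g_pt by (simp add: field_simps)
  then show ?thesis unfolding cdir_diff cdir_iv using assms by simp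
qed

lemma cdir_polar: "cdir d \<theta> = cmod d * cos (\<theta> - Arg d)"
proof -
  have "Re d = cmod d * cos (Arg d)" "Im d = cmod d * sin (Arg d)"
    using Re_rcis[of "cmod d" "Arg d"] Im_rcis[of "cmod d" "Arg d"] rcis_cmod_Arg[of d] by auto
  then show ?thesis unfolding cdir_def cos_diff by (simp add: algebra_simps)
qed

lemma countable_zero:
  assumes "d \<noteq> 0"
  shows "countable {\<theta>. cdir d \<theta> = 0}"
proof -
  have "{\<theta>. cdir d \<theta> = 0} \<subseteq> range (\<lambda>i::int. Arg d + of_int i * (pi/2))"
  proof
    fix \<theta> assume "\<theta> \<in> {\<theta>. cdir d \<theta> = 0}"
    then have "cos (\<theta> - Arg d) = 0" using assms by (simp add: cdir_polar)
    then obtain i where "\<theta> - Arg d = of_int i * (pi/2)" using cos_zero_iff_int by blast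
    then show "\<theta> \<in> range (\<lambda>i::int. Arg d + of_int i * (pi/2))"
      by (intro image_eqI[of _ _ i]) auto
  qed
  then show ?thesis by (rule countable_subset) simp
qed

context vsetup
begin

lemma aux_lin: "2*(C+1) \<le> (h::real) \<Longrightarrow> 0 < C \<Longrightarrow> C < 1 + h"
  by (simp add: distrib_left)

lemma unbounded:
  assumes in_cell: "\<forall>\<rho>. 0 \<le> \<rho> \<and> \<rho> < 1 \<longrightarrow> P (pt \<theta> \<rho>) \<in> voronoi_cell S s"
  shows "\<not> hbounded (voronoi_cell S s)"
proof
  assume "hbounded (voronoi_cell S s)"
  then obtain c R where c: "c \<in> hplane" and R: "\<forall>p\<in>voronoi_cell S s. hdist c p \<le> R"
    unfolding hbounded_def by blast
  define wc where "wc = Psi (Re s) (Im s) c"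
  have wc1: "cmod wc < 1" and Pwc: "P wc = c" using Psi_props[OF b_pos c] by (simp_all add: wc_def)
  define \<delta> where "\<delta> = 1 - cmod wc"
  have d0: "0 < \<delta>" "\<delta> \<le> 1" using wc1 by (auto simp: \<delta>_def)
  define K where "K = cosh R + 1"
  have K0: "K > 0" unfolding K_def using cosh_real_pos[of R] by linarith
  define \<eta> where "\<eta> = min (\<delta>/2) (\<delta>^2/(8*K))"
  have e0: "0 < \<eta>" using d0 K0 by (simp add: \<eta>_def)
  have e1: "\<eta> \<le> \<delta>/2" by (simp add: \<eta>_def)
  have e2: "8*K*\<eta> \<le> \<delta>^2"
  proof -
    have "\<eta> \<le> \<delta>^2/(8*K)" by (simp add: \<eta>_def)
    then show ?thesis using K0 by (simp add: field_simps)
  qed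
  define \<rho> where "\<rho> = 1 - \<eta>"
  have r0: "0 \<le> \<rho>" "\<rho> < 1" using e0 e1 d0 by (auto simp: \<rho>_def)
  define z where "z = pt \<theta> \<rho>"
  have nz: "cmod z = \<rho>" using r0 by (simp add: z_def cmod_pt)
  have z1: "cmod z < 1" using nz r0 by simp
  have "P z \<in> voronoi_cell S s" using in_cell r0 by (simp add: z_def)
  then have hR: "hdist c (P z) \<le> R" using R by blast
  have hd: "hdist c (P z) = arcosh (1 + hk wc z)" using hdist_Phi[where a="Re s", OF b_pos wc1 z1] Pwc by simp
  have hk0: "hk wc z \<ge> 0" using hk_nonneg[OF wc1 z1] .
  have R0: "R \<ge> 0" using hR hd hk0 arcosh_nonneg_real[of "1 + hk wc z"] by linarith
  have "2*K \<le> hk wc z"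
    unfolding hk_def
  proof (rule hk_big[OF _ _ _ _ _ d0(1) e0 e2 K0])
    show "0 < 1 - (cmod wc)^2" using wc1 by (simp add: abs_square_less_1)
    show "1 - (cmod wc)^2 \<le> 1" by simp
    show "0 < 1 - (cmod z)^2" using z1 by (simp add: abs_square_less_1)
    show "1 - (cmod z)^2 \<le> 2*\<eta>" unfolding nz \<rho>_def using e0 by (simp add: power2_eq_square algebra_simps)
    have "cmod z - cmod wc \<le> cmod (wc - z)" by (metis norm_minus_commute norm_triangle_ineq2)
    moreover have "cmod z - cmod wc = \<delta> - \<eta>" unfolding nz \<rho>_def \<delta>_def by simp
    ultimately show "\<delta>/2 \<le> cmod (wc - z)" using e1 by linarith
  qed
  then have big: "cosh R < 1 + hk wc z" unfolding K_def by (rule aux_lin[OF _ cosh_real_pos])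
  have "arcosh (cosh R) < arcosh (1 + hk wc z)"
    using big hk0 by (subst arcosh_less_iff_real) (auto simp: cosh_real_ge_1)
  then have "R < hdist c (P z)" unfolding hd using arcosh_cosh_real[OF R0] by simp
  then show False using hR by simp
qed

lemma sep:
  assumes r: "r > 0" and u: "u \<in> S" "u \<noteq> s" and h: "hdist s u \<ge> 2*r"
  shows "cmod (W u) \<ge> (1 - (exp (-r))^2)/(1 + (exp (-r))^2)"
proof -
  define q where "q = exp (-r)"
  have q: "0 < q" "q < 1" using r by (auto simp: q_def)
  define v where "v = W u"
  have v1: "cmod v < 1" using W_lt[OF u(1)] by (simp add: v_def)
  define m where "m = (cmod v)^2"
  have m: "0 \<le> m" "m < 1" using v1 by (auto simp: m_def abs_square_less_1)
  have hk: "hk 0 v = 2*m/(1-m)" by (simp add: hk_def m_def)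
  have "hdist s u = arcosh (1 + hk 0 v)"
    using hdist_Phi[where a="Re s" and w=0, OF b_pos _ v1] P0 PW[OF u(1)] by (simp add: v_def)
  then have a: "2*r \<le> arcosh (1 + 2*m/(1-m))" using h hk by simp
  have "0 \<le> 2*m/(1-m)" using m by simp
  then have X1: "1 \<le> 1 + 2*m/(1-m)" by linarith
  have "cosh (2*r) \<le> cosh (arcosh (1 + 2*m/(1-m)))"
    using a r X1 by (subst cosh_real_nonneg_le_iff) auto
  then have c: "cosh (2*r) \<le> 1 + 2*m/(1-m)" using X1 by simp
  have ch: "cosh (2*r) = (1/q^2 + q^2)/2"
  proof -
    have eq: "exp r * q = 1" unfolding q_def by (simp add: exp_minus)
    have e2: "exp (2*r) = exp r * exp r" by (subst exp_add[symmetric]) simp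
    have e3: "exp (-(2*r)) = q * q" unfolding q_def by (subst exp_add[symmetric]) simp
    have "exp (2*r) = 1/q^2" unfolding e2 using eq q(1) by (simp add: field_simps power2_eq_square)
    moreover have "exp (-(2*r)) = q^2" unfolding e3 by (simp add: power2_eq_square)
    ultimately show ?thesis by (simp add: cosh_field_def)
  qed
  have c': "(1/q^2 + q^2)/2 \<le> 1 + 2*m/(1-m)" using c unfolding ch .
  have "((1 - q^2)/(1 + q^2))^2 \<le> m" by (rule sep_alg[OF q m c'])
  then have sq: "((1 - q^2)/(1 + q^2))^2 \<le> (cmod v)^2" unfolding m_def .
  have "q^2 < 1^2" using q by (intro power_strict_mono) auto
  then have "q^2 < 1" by simp
  moreover have "0 \<le> q^2" by simp
  ultimately have "0 \<le> (1 - q^2)/(1 + q^2)" by (intro divide_nonneg_pos) linarith+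
  have "(1 - q^2)/(1 + q^2) \<le> cmod v" by (rule power2_le_imp_le[OF sq]) simp
  then show ?thesis unfolding q_def v_def .
qed

lemma direction:
  assumes hb: "hbounded (voronoi_cell S s)"
    and gen: "\<forall>u1\<in>S-{s}. \<forall>u2\<in>S-{s}. u1 \<noteq> u2 \<longrightarrow> cdir (iv (W u1) - iv (W u2)) \<theta> \<noteq> 0"
  shows "\<exists>t\<in>S. delaunay_adj S s t \<and> cdir (W t) \<theta> \<ge> (cmod (W t))^2"
proof -
  define B where "B = {u\<in>S-{s}. \<exists>\<rho>. 0 \<le> \<rho> \<and> \<rho> < 1 \<and> g (W u) (pt \<theta> \<rho>) \<ge> 0}"
  have finB: "finite B" using fin by (simp add: B_def)
  have Bne: "B \<noteq> {}"
  proof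
    assume B0: "B = {}"
    have "\<forall>\<rho>. 0 \<le> \<rho> \<and> \<rho> < 1 \<longrightarrow> P (pt \<theta> \<rho>) \<in> voronoi_cell S s"
    proof (intro allI impI)
      fix \<rho> :: real assume r: "0 \<le> \<rho> \<and> \<rho> < 1"
      have n: "cmod (pt \<theta> \<rho>) < 1" using r by (simp add: cmod_pt)
      have "\<forall>u\<in>S. u \<noteq> s \<longrightarrow> g (W u) (pt \<theta> \<rho>) < 0"
      proof (intro ballI impI)
        fix u assume "u \<in> S" "u \<noteq> s"
        then have "u \<notin> B" using B0 by simp
        then show "g (W u) (pt \<theta> \<rho>) < 0" using \<open>u \<in> S\<close> \<open>u \<noteq> s\<close> r unfolding B_def by force
      qed
      then show "P (pt \<theta> \<rho>) \<in> voronoi_cell S s" using cell_iff[OF n] by simp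
    qed
    then show False using unbounded hb by blast
  qed
  define mm where "mm u = (cmod (W u))^2" for u
  have mm0: "mm u > 0" if "u \<in> B" for u using W_nz that by (auto simp: B_def mm_def)
  have cB: "cdir (W u) \<theta> > mm u" if uB: "u \<in> B" for u
  proof -
    obtain \<rho> where "0 \<le> \<rho>" "\<rho> < 1" "g (W u) (pt \<theta> \<rho>) \<ge> 0" using uB by (auto simp: B_def)
    then show ?thesis using quad_pos_imp[OF mm0[OF uB]] unfolding g_pt mm_def[symmetric] by auto
  qed
  define rf where "rf u = rootf (mm u) (cdir (W u) \<theta>)" for u
  obtain t where tB: "t \<in> B" and tmin: "\<forall>u\<in>B. rf t \<le> rf u"
  proof -
    have "Min (rf ` B) \<in> rf ` B" using finB Bne by simp
    then obtain t where "t \<in> B" "rf t = Min (rf ` B)" by auto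
    moreover have "\<forall>u\<in>B. Min (rf ` B) \<le> rf u" using finB by simp
    ultimately show ?thesis using that by metis
  qed
  have tS: "t \<in> S" "t \<noteq> s" using tB by (auto simp: B_def)
  define \<tau> where "\<tau> = rf t"
  have tau: "0 < \<tau>" "\<tau> < 1" using quad_root(1,2)[OF mm0[OF tB] cB[OF tB]] by (simp_all add: \<tau>_def rf_def)
  have gt0: "g (W t) (pt \<theta> \<tau>) = 0"
    unfolding g_pt mm_def[symmetric] \<tau>_def rf_def using quad_root(3)[OF mm0[OF tB] cB[OF tB]] .
  have gu: "\<forall>u\<in>S. u \<noteq> s \<and> u \<noteq> t \<longrightarrow> g (W u) (pt \<theta> \<tau>) < 0"
  proof (intro ballI impI)
    fix u assume uS: "u \<in> S" and ust: "u \<noteq> s \<and> u \<noteq> t"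
    show "g (W u) (pt \<theta> \<tau>) < 0"
    proof (cases "u \<in> B")
      case False
      then have "\<not> (0 \<le> \<tau> \<and> \<tau> < 1 \<and> g (W u) (pt \<theta> \<tau>) \<ge> 0)" using uS ust unfolding B_def by blast
      then show ?thesis using tau by auto
    next
      case True
      have le: "\<tau> \<le> rf u" using tmin True by (simp add: \<tau>_def)
      show ?thesis
      proof (cases "\<tau> < rf u")
        case True': True
        then show ?thesis unfolding g_pt mm_def[symmetric]
          using quad_root(4)[OF mm0[OF True] cB[OF True]] tau by (simp add: rf_def)
      next
        case False
        then have eq: "\<tau> = rf u" using le by simp
        have gu0: "g (W u) (pt \<theta> \<tau>) = 0"
          unfolding g_pt mm_def[symmetric] eq rf_def using quad_root(3)[OF mm0[OF True] cB[OF True]] .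
        have "cdir (iv (W u) - iv (W t)) \<theta> = 0"
          using two_zero[OF W_nz[OF uS] W_nz[OF tS] tau(1) gu0 gt0] ust by simp
        then show ?thesis using gen uS tS ust by auto
      qed
    qed
  qed
  have "delaunay_adj S s t" by (rule neighbor[OF tS tau gt0 gu])
  moreover have "cdir (W t) \<theta> \<ge> (cmod (W t))^2" using cB[OF tB] by (simp add: mm_def)
  ultimately show ?thesis using tS by blast
qed

end

theorem lemma12:
  fixes r :: real and S :: "complex set" and s :: complex
  assumes "r > 0"
    and "finite S" and "S \<subseteq> hplane"
    and "\<forall>a\<in>S. \<forall>b\<in>S. a \<noteq> b \<longrightarrow> hdist a b \<ge> 2 * r"
    and "s \<in> S"
    and "hbounded (voronoi_cell S s)"
  shows "exp r \<le> real (delaunay_degree S s)"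
proof -
  note r = assms(1) and sepa = assms(4) and hb = assms(6)
  interpret V: vsetup S s using assms by unfold_locales auto
  define q where "q = exp (-r)"
  have q: "0 < q" "q < 1" using r by (auto simp: q_def)
  define N where "N = {t\<in>S. delaunay_adj S s t}"
  have finN: "finite N" using assms(2) by (simp add: N_def)
  have deg: "delaunay_degree S s = card N" by (simp add: delaunay_degree_def N_def)
  define Z where "Z = (\<Union>u1\<in>S-{s}. \<Union>u2\<in>S-{s}-{u1}. {\<theta>. cdir (iv (V.W u1) - iv (V.W u2)) \<theta> = 0})"
  have c1: "countable {\<theta>. cdir (iv (V.W u1) - iv (V.W u2)) \<theta> = 0}"
    if u1: "u1 \<in> S - {s}" and u2: "u2 \<in> S - {s} - {u1}" for u1 u2
  proof -
    have "V.W u1 \<noteq> V.W u2" using V.W_inj u1 u2 by blast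
    then have "iv (V.W u1) \<noteq> iv (V.W u2)" using iv_inj V.W_nz u1 u2 by blast
    then show ?thesis by (intro countable_zero) simp
  qed
  have c2: "countable (\<Union>u2\<in>S-{s}-{u1}. {\<theta>. cdir (iv (V.W u1) - iv (V.W u2)) \<theta> = 0})"
    if u1: "u1 \<in> S - {s}" for u1
    by (rule countable_UN[OF countable_finite c1[OF u1]]) (use assms(2) in auto)
  have cZ: "countable Z" unfolding Z_def
    by (rule countable_UN[OF countable_finite c2]) (use assms(2) in auto)
  define L :: nat where "L = 6"
  have cov: "\<forall>\<theta>\<in>{-2*pi*L..2*pi*L} - Z. \<exists>t\<in>N. \<exists>n::int. \<bar>n\<bar> \<le> L+1 \<and> \<bar>\<theta> - Arg (V.W t) - 2*pi*n\<bar> \<le> 2*q"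
  proof
    fix \<theta> assume th: "\<theta> \<in> {-2*pi*L..2*pi*L} - Z"
    have gen: "\<forall>u1\<in>S-{s}. \<forall>u2\<in>S-{s}. u1 \<noteq> u2 \<longrightarrow> cdir (iv (V.W u1) - iv (V.W u2)) \<theta> \<noteq> 0"
      using th unfolding Z_def by blast
    obtain t where t: "t \<in> S" "delaunay_adj S s t" "cdir (V.W t) \<theta> \<ge> (cmod (V.W t))^2"
      using V.direction[OF hb gen] by blast
    have ts: "t \<noteq> s" using t(2) unfolding delaunay_adj_def by auto
    have tN: "t \<in> N" using t by (simp add: N_def)
    have w: "cmod (V.W t) \<ge> (1 - q^2)/(1 + q^2)"
      using V.sep[OF r t(1) ts] sepa assms(5) t(1) ts unfolding q_def by auto
    have re: "Re (cis \<theta> * cnj (V.W t)) = cdir (V.W t) \<theta>" by (simp add: cdir_def)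
    have "\<bar>\<theta>\<bar> \<le> 2*pi*L" using th by auto
    then show "\<exists>t\<in>N. \<exists>n::int. \<bar>n\<bar> \<le> L+1 \<and> \<bar>\<theta> - Arg (V.W t) - 2*pi*n\<bar> \<le> 2*q"
      using angle_bound[OF q w _ ] t(3) re tN by (metis (no_types, lifting))
  qed
  have q0: "2*q \<ge> 0" using q by simp
  have main: "4*pi*L \<le> card N * (2*L+3) * (2*(2*q))" by (rule covering[OF finN cZ q0 cov])
  then have "24*pi \<le> card N * 15 * (4*q)" by (simp add: L_def)
  moreover have "pi > 3" using pi_gt3 .
  ultimately have "72 < card N * 60 * q" by simp
  then have "72 < 60 * (real (card N) * q)" by (simp only: mult.assoc mult.commute mult.left_commute)
  then have kq: "card N * q > 1" by linarith
  have eq: "exp r * q = 1" unfolding q_def by (simp add: exp_minus)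
  have "exp r = exp r * 1" by simp
  also have "\<dots> \<le> exp r * (card N * q)" using kq by simp
  also have "\<dots> = card N" using eq by (simp add: algebra_simps)
  finally show ?thesis unfolding deg .
qed

end
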